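(* Let $(\mathcal A,d)$ be a DGA and let $a,b_1,\dots,b_n\in\mathcal A$ be closed with $|a|$ even and each $a\wedge b_i$ exact. The indeterminacy $\{x-x' : x,x'\in\langle a;b_1,\dots,b_n\rangle\}$ of the $a$-Massey product $\langle a;b_1,\dots,b_n\rangle$ is a subset of $$\sum_{j=1}^n\langle a;b_1,\dots,\widehat{b_j},\dots,b_n\rangle\wedge H(\mathcal A),$$ where $\widehat{b_j}$ means $b_j$ is omitted. In particular, the indeterminacy of $\langle a;b_1,b_2,b_3\rangle$ is a subset of $$\langle b_1,a,b_2\rangle\wedge H(\mathcal A)+\langle b_2,a,b_3\rangle\wedge H(\mathcal A)+\langle b_3,a,b_1\rangle\wedge H(\mathcal A),$$ where $\langle\cdot,\cdot,\cdot\rangle$ denotes the ordinary triple Massey product.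
   Context: A DGA is a graded-commutative differential graded algebra over $\mathbb R$; $|x|$ denotes degree and $\overline{x}=(-1)^{|x|}x$. Given closed $a,b_1,\dots,b_n$ with $|a|$ even and each $a\wedge b_i$ exact, the $a$-Massey product is $\langle a;b_1,\dots,b_n\rangle=\{[\sum_{i=1}^n\overline{\xi_1}\wedge\cdots\wedge\overline{\xi_{i-1}}\wedge b_i\wedge\xi_{i+1}\wedge\cdots\wedge\xi_n] : d\xi_i=a\wedge b_i\}\subset H(\mathcal A)$. For closed $x_1,x_2,x_3$ with $x_1\wedge x_2$, $x_2\wedge x_3$ exact, the triple Massey product is $\langle x_1,x_2,x_3\rangle=\{[x_1\wedge x_{2,3}+(-1)^{|x_1|+1}x_{1,2}\wedge x_3] : dx_{1,2}=x_1\wedge x_2,\ dx_{2,3}=x_2\wedge x_3\}$. For subsets $S,T\subset H(\mathcal A)$, $S\wedge T$ and $S+T$ denote the sets of products and sums of elements. *)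

theory Defs
  imports Main Complex_Main
begin

definition psign :: "int \<Rightarrow> 'a::ring_1 \<Rightarrow> 'a" where
  "psign k x = (if even k then x else - x)"

text \<open>A (nonnegatively, cohomologically) graded-commutative DGA over the reals:
  the algebra is the type 'a, G k is the degree-k subspace, d the differential.\<close>
definition is_DGA :: "(int \<Rightarrow> 'a::real_algebra_1 set) \<Rightarrow> ('a \<Rightarrow> 'a) \<Rightarrow> bool" where
  "is_DGA G d \<longleftrightarrow>
     (\<forall>k. subspace (G k)) \<and>
     (\<forall>k<0. G k = {0}) \<and>
     (\<forall>x. \<exists>!c::int \<Rightarrow> 'a. finite {k. c k \<noteq> 0} \<and> (\<forall>k. c k \<in> G k)
            \<and> x = (\<Sum>k\<in>{k. c k \<noteq> 0}. c k)) \<and>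
     1 \<in> G 0 \<and>
     (\<forall>k l x y. x \<in> G k \<longrightarrow> y \<in> G l \<longrightarrow> x * y \<in> G (k + l)) \<and>
     (\<forall>k l x y. x \<in> G k \<longrightarrow> y \<in> G l \<longrightarrow> x * y = psign (k * l) (y * x)) \<and>
     linear d \<and>
     (\<forall>k x. x \<in> G k \<longrightarrow> d x \<in> G (k + 1)) \<and>
     (\<forall>x. d (d x) = 0) \<and>
     (\<forall>k x y. x \<in> G k \<longrightarrow> d (x * y) = d x * y + psign k (x * d y))"

text \<open>Cohomology classes are represented as cosets x + im d.\<close>
definition cls :: "('a::real_algebra_1 \<Rightarrow> 'a) \<Rightarrow> 'a \<Rightarrow> 'a set" where
  "cls d x = {x + d y | y. True}"

definition Hset :: "('a::real_algebra_1 \<Rightarrow> 'a) \<Rightarrow> 'a set set" where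
  "Hset d = {cls d z | z. d z = 0}"

definition hadd :: "'a::real_algebra_1 set \<Rightarrow> 'a set \<Rightarrow> 'a set" where
  "hadd X Y = {x + y | x y. x \<in> X \<and> y \<in> Y}"

definition hdiff :: "'a::real_algebra_1 set \<Rightarrow> 'a set \<Rightarrow> 'a set" where
  "hdiff X Y = {x - y | x y. x \<in> X \<and> y \<in> Y}"

definition hmul :: "('a::real_algebra_1 \<Rightarrow> 'a) \<Rightarrow> 'a set \<Rightarrow> 'a set \<Rightarrow> 'a set" where
  "hmul d X Y = (\<Union>x\<in>X. \<Union>y\<in>Y. cls d (x * y))"

definition smul :: "('a::real_algebra_1 \<Rightarrow> 'a) \<Rightarrow> 'a set set \<Rightarrow> 'a set set \<Rightarrow> 'a set set" where
  "smul d S T = {hmul d X Y | X Y. X \<in> S \<and> Y \<in> T}"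

definition sadd :: "'a::real_algebra_1 set set \<Rightarrow> 'a set set \<Rightarrow> 'a set set" where
  "sadd S T = {hadd X Y | X Y. X \<in> S \<and> Y \<in> T}"

fun ssum :: "('a::real_algebra_1 \<Rightarrow> 'a) \<Rightarrow> (nat \<Rightarrow> 'a set set) \<Rightarrow> nat \<Rightarrow> 'a set set" where
  "ssum d F 0 = {cls d 0}"
| "ssum d F (Suc j) = sadd (ssum d F j) (F (Suc j))"

definition indet :: "'a::real_algebra_1 set set \<Rightarrow> 'a set set" where
  "indet S = {hdiff X Y | X Y. X \<in> S \<and> Y \<in> S}"

text \<open>The a-Massey product <a; b_1, ..., b_n>, with |a| = p and |b_i| = q i;
  defining systems xi_i are homogeneous of degree p + q i - 1 with d xi_i = a b_i.\<close>
definition amassey :: "(int \<Rightarrow> 'a::real_algebra_1 set) \<Rightarrow> ('a \<Rightarrow> 'a) \<Rightarrow> int \<Rightarrow> (nat \<Rightarrow> int)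
    \<Rightarrow> 'a \<Rightarrow> (nat \<Rightarrow> 'a) \<Rightarrow> nat \<Rightarrow> 'a set set" where
  "amassey G d p q a b n =
     {cls d (\<Sum>i=1..n. prod_list (map (\<lambda>k. psign (p + q k - 1) (\<xi> k)) [1..<i])
                       * b i * prod_list (map \<xi> [Suc i..<Suc n]))
      | \<xi>. \<forall>i\<in>{1..n}. \<xi> i \<in> G (p + q i - 1) \<and> d (\<xi> i) = a * b i}"

text \<open>Ordinary triple Massey product <x1, x2, x3>, |x_i| = k_i.\<close>
definition tmassey :: "(int \<Rightarrow> 'a::real_algebra_1 set) \<Rightarrow> ('a \<Rightarrow> 'a) \<Rightarrow> int \<Rightarrow> int \<Rightarrow> int
    \<Rightarrow> 'a \<Rightarrow> 'a \<Rightarrow> 'a \<Rightarrow> 'a set set" where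
  "tmassey G d k1 k2 k3 x1 x2 x3 =
     {cls d (x1 * x23 + psign (k1 + 1) (x12 * x3)) | x12 x23.
        x12 \<in> G (k1 + k2 - 1) \<and> d x12 = x1 * x2 \<and>
        x23 \<in> G (k2 + k3 - 1) \<and> d x23 = x2 * x3}"

definition omit :: "nat \<Rightarrow> (nat \<Rightarrow> 'b) \<Rightarrow> nat \<Rightarrow> 'b" where
  "omit j f i = (if i < j then f i else f (Suc i))"

end

theory Submission
  imports Defs
begin



lemma psign_even[simp]: "even k \<Longrightarrow> psign k x = x" by (simp add: psign_def)
lemma psign_cong: "even k = even l \<Longrightarrow> psign k x = psign l x" by (simp add: psign_def)
lemma psign_add: "psign (k + l) x = psign k (psign l x)" by (auto simp: psign_def)
lemma psign_mult_left: "psign k x * y = psign k (x * y)" by (simp add: psign_def)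
lemma psign_mult_right: "x * psign k y = psign k (x * y)" by (simp add: psign_def)
lemma psign_plus: "psign k (x + y) = psign k x + psign k y" by (simp add: psign_def)
lemma psign_minus: "psign k (x - y) = psign k x - psign k y" by (simp add: psign_def)
lemma psign_0[simp]: "psign k 0 = 0" by (simp add: psign_def)
lemma psign_sum: "psign k (sum f A) = (\<Sum>i\<in>A. psign k (f i))"
  by (simp add: psign_def sum_negf)

definition Pp :: "int \<Rightarrow> (nat \<Rightarrow> int) \<Rightarrow> (nat \<Rightarrow> 'a::real_algebra_1) \<Rightarrow> nat \<Rightarrow> 'a" where
  "Pp p q \<xi> i = prod_list (map (\<lambda>k. psign (p + q k - 1) (\<xi> k)) [1..<i])"

definition Mm :: "int \<Rightarrow> (nat \<Rightarrow> int) \<Rightarrow> (nat \<Rightarrow> 'a::real_algebra_1) \<Rightarrow> nat \<Rightarrow> (nat \<Rightarrow> 'a) \<Rightarrow> 'a" where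
  "Mm p q b n \<xi> = (\<Sum>i=1..n. Pp p q \<xi> i * b i * prod_list (map \<xi> [Suc i..<Suc n]))"

definition Ecum :: "int \<Rightarrow> (nat \<Rightarrow> int) \<Rightarrow> nat \<Rightarrow> int" where
  "Ecum p q n = (\<Sum>k=1..n. p + q k - 1)"

lemma Ecum_Suc: "Ecum p q (Suc n) = Ecum p q n + (p + q (Suc n) - 1)"
  by (simp add: Ecum_def)

lemma Pp_1[simp]: "Pp p q \<xi> (Suc 0) = 1" by (simp add: Pp_def)

lemma Pp_Suc: "Pp p q \<xi> (Suc (Suc n)) = Pp p q \<xi> (Suc n) * psign (p + q (Suc n) - 1) (\<xi> (Suc n))"
  by (simp add: Pp_def)

lemma Mm_0[simp]: "Mm p q b 0 \<xi> = 0" by (simp add: Mm_def)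

lemma Mm_Suc: "Mm p q b (Suc n) \<xi> = Mm p q b n \<xi> * \<xi> (Suc n) + Pp p q \<xi> (Suc n) * b (Suc n)"
proof -
  have "(\<Sum>i=1..n. Pp p q \<xi> i * b i * prod_list (map \<xi> [Suc i..<Suc (Suc n)]))
      = (\<Sum>i=1..n. Pp p q \<xi> i * b i * prod_list (map \<xi> [Suc i..<Suc n]) * \<xi> (Suc n))"
    by (rule sum.cong) (auto simp: mult.assoc)
  then show ?thesis
    by (simp add: Mm_def sum_distrib_right)
qed

lemma Pp_cong: "(\<And>k. 1 \<le> k \<Longrightarrow> k < i \<Longrightarrow> q k = q' k \<and> \<xi> k = \<xi>' k) \<Longrightarrow> Pp p q \<xi> i = Pp p q' \<xi>' i"
  unfolding Pp_def by (intro arg_cong[where f=prod_list] map_cong) auto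

lemma Mm_cong: "(\<And>k. 1 \<le> k \<Longrightarrow> k \<le> n \<Longrightarrow> q k = q' k \<and> b k = b' k \<and> \<xi> k = \<xi>' k) \<Longrightarrow> Mm p q b n \<xi> = Mm p q' b' n \<xi>'"
  unfolding Mm_def
  apply (intro sum.cong refl)
  apply (subst Pp_cong[of _ q q' \<xi> \<xi>']) apply force
  apply (intro arg_cong2[where f="(*)"] arg_cong[where f=prod_list] map_cong) apply auto
  done




locale dga =
  fixes G :: "int \<Rightarrow> 'a::real_algebra_1 set" and d :: "'a \<Rightarrow> 'a" and p :: int and a :: 'a
  assumes DGA: "is_DGA G d" and aG: "a \<in> G p" and pev: "even p" and da: "d a = 0"
begin

lemmas D = DGA[unfolded is_DGA_def]
lemmas D1 = conjunct1[OF D]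
lemmas D2 = conjunct2[OF D]
lemmas D3 = conjunct2[OF D2]
lemmas D4 = conjunct2[OF D3]
lemmas D5 = conjunct2[OF D4]
lemmas D6 = conjunct2[OF D5]
lemmas D7 = conjunct2[OF D6]
lemmas D8 = conjunct2[OF D7]
lemmas D9 = conjunct2[OF D8]
lemmas D10 = conjunct2[OF D9]
lemma sub: "subspace (G k)" using D1 by blast
lemma G0: "0 \<in> G k" using sub subspace_0 by blast
lemma Gadd: "x \<in> G k \<Longrightarrow> y \<in> G k \<Longrightarrow> x + y \<in> G k" using sub subspace_add by blast
lemma Gdiff: "x \<in> G k \<Longrightarrow> y \<in> G k \<Longrightarrow> x - y \<in> G k" using sub subspace_diff by blast
lemma Gneg: "x \<in> G k \<Longrightarrow> - x \<in> G k" using sub subspace_neg by blast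
lemma Gpsign: "x \<in> G k \<Longrightarrow> psign l x \<in> G k" by (simp add: psign_def Gneg)
lemma Gmult: "x \<in> G k \<Longrightarrow> y \<in> G l \<Longrightarrow> x * y \<in> G (k + l)" using conjunct1[OF D5] by blast
lemma G1: "1 \<in> G 0" using conjunct1[OF D4] by blast
lemma comm: "x \<in> G k \<Longrightarrow> y \<in> G l \<Longrightarrow> x * y = psign (k * l) (y * x)" using conjunct1[OF D6] by blast
lemma lin: "linear d" using conjunct1[OF D7] by blast
lemma d_add: "d (x + y) = d x + d y" using lin by (simp add: linear_add)
lemma d_diff: "d (x - y) = d x - d y" using lin by (simp add: linear_diff)
lemma d_0[simp]: "d 0 = 0" using lin by (simp add: linear_0)
lemma d_neg: "d (- x) = - d x" using lin by (simp add: linear_neg)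
lemma d_sum: "d (sum f A) = (\<Sum>i\<in>A. d (f i))" using lin by (simp add: linear_sum)
lemma d_psign: "d (psign k x) = psign k (d x)" by (simp add: psign_def d_neg)
lemma dd[simp]: "d (d x) = 0" using conjunct1[OF D9] by blast
lemma leib: "x \<in> G k \<Longrightarrow> d (x * y) = d x * y + psign k (x * d y)" using D10 by blast
lemma decomp: "\<exists>c::int \<Rightarrow> 'a. finite {k. c k \<noteq> 0} \<and> (\<forall>k. c k \<in> G k) \<and> x = (\<Sum>k\<in>{k. c k \<noteq> 0}. c k)"
  using conjunct1[OF D3] by blast

lemma d1[simp]: "d 1 = 0"
proof -
  have "d (1 * 1) = d 1 * 1 + psign 0 (1 * d 1)" using leib[OF G1] .
  then show ?thesis by simp
qed

lemma acomm: "x \<in> G k \<Longrightarrow> a * x = x * a"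
  using comm[OF aG, of x k] pev by simp

lemma psign_G_comm: "x \<in> G k \<Longrightarrow> y \<in> G l \<Longrightarrow> x * y = psign (k * l) (y * x)" by (rule comm)

lemma cls_eq: "x - y \<in> range d \<Longrightarrow> cls d x = cls d y"
proof -
  assume "x - y \<in> range d"
  then obtain z where z: "x - y = d z" by auto
  show ?thesis unfolding cls_def
  proof (intro set_eqI iffI)
    fix u assume "u \<in> {x + d y |y. True}"
    then obtain t where "u = x + d t" by auto
    then have "u = y + d (z + t)" using z by (simp add: d_add algebra_simps)
    then show "u \<in> {y + d ya |ya. True}" by auto
  next
    fix u assume "u \<in> {y + d ya |ya. True}"
    then obtain t where "u = y + d t" by auto
    then have "u = x + d (t - z)" using z by (simp add: d_diff algebra_simps)
    then show "u \<in> {x + d y |y. True}" by auto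
  qed
qed

lemma cls_mem: "x \<in> cls d x" unfolding cls_def by (auto intro: exI[of _ 0])

lemma hadd_cls: "hadd (cls d x) (cls d y) = cls d (x + y)"
  unfolding hadd_def cls_def
proof (intro set_eqI iffI)
  fix u assume "u \<in> {xa + ya |xa ya. xa \<in> {x + d y |y. True} \<and> ya \<in> {y + d ya |ya. True}}"
  then obtain s t where "u = x + d s + (y + d t)" by auto
  then have "u = x + y + d (s + t)" by (simp add: d_add algebra_simps)
  then show "u \<in> {x + y + d ya |ya. True}" by auto
next
  fix u assume "u \<in> {x + y + d ya |ya. True}"
  then obtain t where "u = x + y + d t" by auto
  then have "u = (x + d t) + (y + d 0)" by simp
  then show "u \<in> {xa + ya |xa ya. xa \<in> {x + d y |y. True} \<and> ya \<in> {y + d ya |ya. True}}" by blast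
qed

lemma hdiff_cls: "hdiff (cls d x) (cls d y) = cls d (x - y)"
  unfolding hdiff_def cls_def
proof (intro set_eqI iffI)
  fix u assume "u \<in> {xa - ya |xa ya. xa \<in> {x + d y |y. True} \<and> ya \<in> {y + d ya |ya. True}}"
  then obtain s t where "u = x + d s - (y + d t)" by auto
  then have "u = x - y + d (s - t)" by (simp add: d_diff algebra_simps)
  then show "u \<in> {x - y + d ya |ya. True}" by auto
next
  fix u assume "u \<in> {x - y + d ya |ya. True}"
  then obtain t where "u = x - y + d t" by auto
  then have "u = (x + d t) - (y + d 0)" by simp
  then show "u \<in> {xa - ya |xa ya. xa \<in> {x + d y |y. True} \<and> ya \<in> {y + d ya |ya. True}}" by blast
qed

lemma dmult_closed: "d y = 0 \<Longrightarrow> d u * y \<in> range d"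
proof -
  assume dy: "d y = 0"
  obtain c where c: "finite {k. c k \<noteq> 0}" "\<forall>k. c k \<in> G k" "u = (\<Sum>k\<in>{k. c k \<noteq> 0}. c k)"
    using decomp[of u] by auto
  have "d u * y = (\<Sum>k\<in>{k. c k \<noteq> 0}. d (c k) * y)" unfolding c(3) d_sum sum_distrib_right ..
  also have "\<dots> = (\<Sum>k\<in>{k. c k \<noteq> 0}. d (c k * y))"
  proof (rule sum.cong[OF refl])
    fix k have "d (c k * y) = d (c k) * y + psign k (c k * d y)" using c(2) leib by blast
    then show "d (c k) * y = d (c k * y)" using dy by (simp add: mult_0_right)
  qed
  also have "\<dots> = d (\<Sum>k\<in>{k. c k \<noteq> 0}. c k * y)" by (rule d_sum[symmetric])
  finally show ?thesis by (rule range_eqI)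
qed

lemma hmul_cls: assumes "d m = 0" "m \<in> G k" "d w = 0"
  shows "hmul d (cls d m) (cls d w) = cls d (m * w)"
proof -
  have eq: "cls d (x * y) = cls d (m * w)" if xm: "x \<in> cls d m" and yw: "y \<in> cls d w" for x y
  proof -
    obtain u v where uv: "x = m + d u" "y = w + d v" using xm yw unfolding cls_def by auto
    have dy: "d y = 0" using uv assms by (simp add: d_add)
    obtain z1 where z1: "d u * y = d z1" using dmult_closed[OF dy] by auto
    have "d (m * v) = psign k (m * d v)" using leib[OF assms(2)] assms by simp
    then have z2: "m * d v = d (psign k (m * v))" by (auto simp: d_psign psign_def d_neg)
    have "x * y - m * w = m * d v + d u * y"
      using uv by (simp add: algebra_simps)
    also have "\<dots> = d z1 + d (psign k (m * v))" unfolding z1 z2 by (simp add: add.commute)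
    also have "\<dots> = d (z1 + psign k (m * v))" by (simp add: d_add)
    finally show ?thesis by (intro cls_eq) auto
  qed
  have mm: "m \<in> cls d m" "w \<in> cls d w" by (rule cls_mem)+
  show ?thesis unfolding hmul_def
  proof
    show "(\<Union>x\<in>cls d m. \<Union>y\<in>cls d w. cls d (x * y)) \<subseteq> cls d (m * w)"
    proof (intro UN_least)
      fix x y assume "x \<in> cls d m" "y \<in> cls d w"
      then show "cls d (x * y) \<subseteq> cls d (m * w)" using eq[of x y] by (simp only: order_refl)
    qed
    show "cls d (m * w) \<subseteq> (\<Union>x\<in>cls d m. \<Union>y\<in>cls d w. cls d (x * y))"
    proof
      fix z assume "z \<in> cls d (m * w)"
      then show "z \<in> (\<Union>x\<in>cls d m. \<Union>y\<in>cls d w. cls d (x * y))"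
        using mm by (intro UN_I[of m] UN_I[of w]) auto
    qed
  qed
qed

end



lemma psign_comm: "psign k (psign l x) = psign l (psign k x)" by (simp add: psign_def)
lemma psign_neg: "psign k (- x) = - psign k x" by (simp add: psign_def)
lemma psign_flip: "odd (k - l) \<Longrightarrow> psign k x = - psign l x" by (auto simp: psign_def)

context dga begin

lemma Geq: "x \<in> G k \<Longrightarrow> k = l \<Longrightarrow> x \<in> G l" by simp

lemma P_G: "(\<forall>i\<in>{1..n}. \<xi> i \<in> G (p + q i - 1)) \<Longrightarrow> Pp p q \<xi> (Suc n) \<in> G (Ecum p q n)"
proof (induction n)
  case 0 then show ?case using G1 by (simp add: Ecum_def)
next
  case (Suc n)
  have "Pp p q \<xi> (Suc n) \<in> G (Ecum p q n)" using Suc by auto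
  moreover have "psign (p + q (Suc n) - 1) (\<xi> (Suc n)) \<in> G (p + q (Suc n) - 1)"
    using Suc.prems by (intro Gpsign) auto
  ultimately show ?case unfolding Pp_Suc Ecum_Suc by (rule Gmult)
qed

lemma M_G: "(\<forall>i\<in>{1..n}. \<xi> i \<in> G (p + q i - 1)) \<Longrightarrow> (\<forall>i\<in>{1..n}. b i \<in> G (q i))
   \<Longrightarrow> Mm p q b n \<xi> \<in> G (Ecum p q n - p + 1)"
proof (induction n)
  case 0 then show ?case by (simp add: G0)
next
  case (Suc n)
  have M: "Mm p q b n \<xi> \<in> G (Ecum p q n - p + 1)" using Suc by auto
  have x: "\<xi> (Suc n) \<in> G (p + q (Suc n) - 1)" using Suc.prems by auto
  have P: "Pp p q \<xi> (Suc n) \<in> G (Ecum p q n)" using Suc.prems by (intro P_G) auto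
  have bb: "b (Suc n) \<in> G (q (Suc n))" using Suc.prems by auto
  show ?case unfolding Mm_Suc
    by (rule Gadd; rule Geq[OF Gmult]; (rule M x P bb)?; simp add: Ecum_Suc)
qed

lemma closed_aux:
  assumes "\<forall>i\<in>{1..n}. \<xi> i \<in> G (p + q i - 1) \<and> d (\<xi> i) = a * b i"
    and "\<forall>i\<in>{1..n}. b i \<in> G (q i) \<and> d (b i) = 0"
  shows "d (Pp p q \<xi> (Suc n)) = psign (Ecum p q n) (a * Mm p q b n \<xi>) \<and> d (Mm p q b n \<xi>) = 0"
  using assms
proof (induction n)
  case 0 then show ?case by (simp add: Ecum_def)
next
  case (Suc n)
  let ?E = "Ecum p q n" and ?e = "p + q (Suc n) - 1" and ?P = "Pp p q \<xi> (Suc n)"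
    and ?M = "Mm p q b n \<xi>" and ?x = "\<xi> (Suc n)" and ?b = "b (Suc n)"
  have IH: "d ?P = psign ?E (a * ?M)" "d ?M = 0" using Suc by auto
  have PG: "?P \<in> G ?E" using Suc.prems by (intro P_G) auto
  have MG: "?M \<in> G (?E - p + 1)" using Suc.prems by (intro M_G) auto
  have x: "d ?x = a * ?b" using Suc.prems by auto
  have bb: "d ?b = 0" using Suc.prems by auto
  have aP: "a * ?P = ?P * a" using acomm[OF PG] .
  have aM: "a * ?M = ?M * a" using acomm[OF MG] .
  have aPb: "?P * (a * ?b) = a * (?P * ?b)" by (metis aP mult.assoc)
  have "d (Pp p q \<xi> (Suc (Suc n))) = d ?P * psign ?e ?x + psign ?E (?P * d (psign ?e ?x))"
    unfolding Pp_Suc by (rule leib[OF PG])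
  also have "\<dots> = psign ?E (psign ?e (a * ?M * ?x)) + psign ?E (psign ?e (?P * (a * ?b)))"
    by (simp add: IH d_psign x psign_mult_left psign_mult_right psign_comm[of ?E])
  also have "\<dots> = psign (?E + ?e) (a * (?M * ?x + ?P * ?b))"
    by (simp add: psign_add psign_plus distrib_left aPb mult.assoc)
  finally have 1: "d (Pp p q \<xi> (Suc (Suc n))) = psign (Ecum p q (Suc n)) (a * Mm p q b (Suc n) \<xi>)"
    by (simp add: Mm_Suc Ecum_Suc)
  have "d (Mm p q b (Suc n) \<xi>) = (d ?M * ?x + psign (?E - p + 1) (?M * d ?x)) + (d ?P * ?b + psign ?E (?P * d ?b))"
    unfolding Mm_Suc d_add by (simp add: leib[OF MG] leib[OF PG])
  also have "\<dots> = psign (?E - p + 1) (?M * a * ?b) + psign ?E (?M * a * ?b)"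
    by (simp add: IH x bb psign_mult_left aM mult.assoc)
  also have "\<dots> = 0"
    using psign_flip[of "?E - p + 1" ?E "?M * a * ?b"] pev by simp
  finally show ?case using 1 by simp
qed

end



definition hyb :: "(nat \<Rightarrow> 'a) \<Rightarrow> (nat \<Rightarrow> 'a) \<Rightarrow> nat \<Rightarrow> nat \<Rightarrow> 'a" where
  "hyb \<xi> \<xi>' j k = (if k < j then \<xi>' k else \<xi> (Suc k))"

definition sg :: "int \<Rightarrow> (nat \<Rightarrow> int) \<Rightarrow> nat \<Rightarrow> int" where
  "sg p q j = (p + q j - 1) * (Ecum p q (j - 1) + 1)"

context dga begin

lemma Pdiff:
  assumes "\<forall>i\<in>{1..n}. \<xi> i \<in> G (p + q i - 1) \<and> \<xi>' i \<in> G (p + q i - 1)"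
  shows "Pp p q \<xi>' (Suc n) - Pp p q \<xi> (Suc n)
     = (\<Sum>j=1..n. psign (sg p q j) ((\<xi>' j - \<xi> j) * Pp p (omit j q) (hyb \<xi> \<xi>' j) n))"
  using assms
proof (induction n)
  case 0 then show ?case by simp
next
  case (Suc n)
  let ?e = "p + q (Suc n) - 1" and ?E = "Ecum p q n"
  let ?P = "Pp p q \<xi> (Suc n)" and ?P' = "Pp p q \<xi>' (Suc n)" and ?x = "\<xi> (Suc n)" and ?x' = "\<xi>' (Suc n)"
  let ?f = "\<lambda>m j. psign (sg p q j) ((\<xi>' j - \<xi> j) * Pp p (omit j q) (hyb \<xi> \<xi>' j) m)"
  have IH: "?P' - ?P = (\<Sum>j=1..n. ?f n j)" using Suc by auto
  have P'G: "?P' \<in> G ?E" using Suc.prems by (intro P_G) auto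
  have etaG: "?x' - ?x \<in> G ?e" using Suc.prems by (intro Gdiff) auto
  have step: "Pp p (omit j q) (hyb \<xi> \<xi>' j) (Suc n) = Pp p (omit j q) (hyb \<xi> \<xi>' j) n * psign ?e ?x"
    if jn: "j \<in> {1..n}" for j
  proof -
    obtain m where n: "n = Suc m" using jn by (cases n) auto
    show ?thesis using jn unfolding n Pp_Suc by (simp add: omit_def hyb_def)
  qed
  have last: "Pp p (omit (Suc n) q) (hyb \<xi> \<xi>' (Suc n)) (Suc n) = ?P'"
    by (rule Pp_cong) (simp add: omit_def hyb_def)
  have "Pp p q \<xi>' (Suc (Suc n)) - Pp p q \<xi> (Suc (Suc n))
      = (?P' - ?P) * psign ?e ?x + ?P' * psign ?e (?x' - ?x)"
    unfolding Pp_Suc by (simp add: psign_minus algebra_simps)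
  also have "(?P' - ?P) * psign ?e ?x = (\<Sum>j=1..n. ?f (Suc n) j)"
    unfolding IH sum_distrib_right
    by (rule sum.cong[OF refl]) (simp add: step psign_mult_left mult.assoc)
  also have "?P' * psign ?e (?x' - ?x) = ?f (Suc n) (Suc n)"
  proof -
    have "?P' * psign ?e (?x' - ?x) = psign ?e (psign (?E * ?e) ((?x' - ?x) * ?P'))"
      using comm[OF P'G etaG] by (simp add: psign_mult_right)
    also have "\<dots> = psign (sg p q (Suc n)) ((?x' - ?x) * ?P')"
      by (simp add: psign_add[symmetric] sg_def algebra_simps)
    finally show ?thesis using last by simp
  qed
  finally show ?case by simp
qed

lemma Mdiff:
  assumes "\<forall>i\<in>{1..n}. \<xi> i \<in> G (p + q i - 1) \<and> \<xi>' i \<in> G (p + q i - 1)"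
    and "\<forall>i\<in>{1..n}. b i \<in> G (q i)"
  shows "Mm p q b n \<xi>' - Mm p q b n \<xi>
     = (\<Sum>j=1..n. psign (sg p q j) ((\<xi>' j - \<xi> j) * Mm p (omit j q) (omit j b) (n - 1) (hyb \<xi> \<xi>' j)))"
  using assms
proof (induction n)
  case 0 then show ?case by simp
next
  case (Suc n)
  let ?e = "p + q (Suc n) - 1" and ?E = "Ecum p q n"
  let ?P = "Pp p q \<xi> (Suc n)" and ?P' = "Pp p q \<xi>' (Suc n)" and ?x = "\<xi> (Suc n)" and ?x' = "\<xi>' (Suc n)"
  let ?M = "Mm p q b n \<xi>" and ?M' = "Mm p q b n \<xi>'" and ?b = "b (Suc n)"
  let ?Mj = "\<lambda>m j. Mm p (omit j q) (omit j b) m (hyb \<xi> \<xi>' j)"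
  let ?Pj = "\<lambda>j. Pp p (omit j q) (hyb \<xi> \<xi>' j) n"
  let ?eta = "\<lambda>j. \<xi>' j - \<xi> j"
  have IH: "?M' - ?M = (\<Sum>j=1..n. psign (sg p q j) (?eta j * ?Mj (n - 1) j))" using Suc by auto
  have PD: "?P' - ?P = (\<Sum>j=1..n. psign (sg p q j) (?eta j * ?Pj j))"
    using Suc.prems by (intro Pdiff) auto
  have M'G: "?M' \<in> G (?E - p + 1)" using Suc.prems by (intro M_G) auto
  have etaG: "?x' - ?x \<in> G ?e" using Suc.prems by (intro Gdiff) auto
  have step: "?Mj n j = ?Mj (n - 1) j * ?x + ?Pj j * ?b" if jn: "j \<in> {1..n}" for j
  proof -
    obtain m where n: "n = Suc m" using jn by (cases n) auto
    show ?thesis using jn unfolding n Mm_Suc by (simp add: omit_def hyb_def)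
  qed
  have last: "?Mj n (Suc n) = ?M'"
    by (rule Mm_cong) (simp add: omit_def hyb_def)
  have "Mm p q b (Suc n) \<xi>' - Mm p q b (Suc n) \<xi>
      = ((?M' - ?M) * ?x + (?P' - ?P) * ?b) + ?M' * (?x' - ?x)"
    unfolding Mm_Suc by (simp add: algebra_simps)
  also have "(?M' - ?M) * ?x + (?P' - ?P) * ?b = (\<Sum>j=1..n. psign (sg p q j) (?eta j * ?Mj n j))"
    unfolding IH PD sum_distrib_right sum.distrib[symmetric]
    by (rule sum.cong[OF refl]) (simp add: step psign_mult_left mult.assoc psign_plus distrib_left)
  also have "?M' * (?x' - ?x) = psign (sg p q (Suc n)) (?eta (Suc n) * ?Mj n (Suc n))"
  proof -
    have "?M' * (?x' - ?x) = psign ((?E - p + 1) * ?e) ((?x' - ?x) * ?M')"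
      using comm[OF M'G etaG] .
    also have "\<dots> = psign (sg p q (Suc n)) ((?x' - ?x) * ?M')"
    proof (rule psign_cong)
      have "(?E - p + 1) * ?e = sg p q (Suc n) - p * ?e" by (simp add: sg_def algebra_simps)
      then show "even ((?E - p + 1) * ?e) = even (sg p q (Suc n))" using pev by simp
    qed
    finally show ?thesis using last by simp
  qed
  finally show ?case by simp
qed

end



lemma amassey_eq: "amassey G d p q a b n =
  {cls d (Mm p q b n \<xi>) | \<xi>. \<forall>i\<in>{1..n}. \<xi> i \<in> G (p + q i - 1) \<and> d (\<xi> i) = a * b i}"
  by (simp add: amassey_def Mm_def Pp_def)

lemma Mm_two: "Mm p q b 2 \<xi> = b 1 * \<xi> 2 + psign (p + q 1 - 1) (\<xi> 1) * b 2"
  by (simp add: numeral_2_eq_2 Mm_Suc Pp_Suc)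

context dga begin

lemma ssum_mem: "(\<forall>j\<in>{1..n}. cls d (f j) \<in> F j) \<Longrightarrow> cls d (\<Sum>j=1..n. f j) \<in> ssum d F n"
proof (induction n)
  case 0 then show ?case by simp
next
  case (Suc n)
  have "cls d (\<Sum>j=1..Suc n. f j) = hadd (cls d (\<Sum>j=1..n. f j)) (cls d (f (Suc n)))"
    by (simp add: hadd_cls)
  moreover have "cls d (\<Sum>j=1..n. f j) \<in> ssum d F n" using Suc by auto
  moreover have "cls d (f (Suc n)) \<in> F (Suc n)" using Suc.prems by auto
  ultimately show ?case unfolding ssum.simps sadd_def by blast
qed

lemma core:
  assumes v1: "\<forall>i\<in>{1..n}. \<xi> i \<in> G (p + q i - 1) \<and> d (\<xi> i) = a * b i"
    and v2: "\<forall>i\<in>{1..n}. \<xi>' i \<in> G (p + q i - 1) \<and> d (\<xi>' i) = a * b i"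
    and bt: "\<forall>i\<in>{1..n}. b i \<in> G (q i) \<and> d (b i) = 0"
  shows "\<exists>\<zeta> w. (\<forall>j\<in>{1..n}. (\<forall>i\<in>{1..n - 1}. \<zeta> j i \<in> G (p + omit j q i - 1) \<and> d (\<zeta> j i) = a * omit j b i)
              \<and> d (w j) = 0 \<and> d (Mm p (omit j q) (omit j b) (n - 1) (\<zeta> j)) = 0
              \<and> Mm p (omit j q) (omit j b) (n - 1) (\<zeta> j) \<in> G (Ecum p (omit j q) (n - 1) - p + 1))
           \<and> Mm p q b n \<xi>' - Mm p q b n \<xi> = (\<Sum>j=1..n. Mm p (omit j q) (omit j b) (n - 1) (\<zeta> j) * w j)"
proof -
  let ?D = "\<lambda>j. Ecum p (omit j q) (n - 1) - p + 1"
  let ?m = "\<lambda>j. Mm p (omit j q) (omit j b) (n - 1) (hyb \<xi> \<xi>' j)"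
  let ?eta = "\<lambda>j. \<xi>' j - \<xi> j"
  define w where "w j = psign (sg p q j + (p + q j - 1) * ?D j) (?eta j)" for j
  have val: "\<forall>i\<in>{1..n - 1}. hyb \<xi> \<xi>' j i \<in> G (p + omit j q i - 1) \<and> d (hyb \<xi> \<xi>' j i) = a * omit j b i"
    if "j \<in> {1..n}" for j
    using v1 v2 by (auto simp: hyb_def omit_def)
  have btj: "\<forall>i\<in>{1..n - 1}. omit j b i \<in> G (omit j q i) \<and> d (omit j b i) = 0" for j
    using bt by (auto simp: omit_def)
  have mcl: "d (?m j) = 0" if "j \<in> {1..n}" for j
    using closed_aux[OF val[OF that] btj] by blast
  have mG: "?m j \<in> G (?D j)" if "j \<in> {1..n}" for j
    using val[OF that] btj by (intro M_G) auto
  have wcl: "d (w j) = 0" if "j \<in> {1..n}" for j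
    using v1 v2 that by (simp add: w_def d_psign d_diff)
  have eq: "psign (sg p q j) (?eta j * ?m j) = ?m j * w j" if jn: "j \<in> {1..n}" for j
  proof -
    have etaG: "?eta j \<in> G (p + q j - 1)" using v1 v2 jn by (intro Gdiff) auto
    have "?eta j * ?m j = psign ((p + q j - 1) * ?D j) (?m j * ?eta j)"
      using comm[OF etaG mG[OF jn]] .
    then show ?thesis by (simp add: w_def psign_add psign_mult_right)
  qed
  have "Mm p q b n \<xi>' - Mm p q b n \<xi> = (\<Sum>j=1..n. psign (sg p q j) (?eta j * ?m j))"
    using v1 v2 bt by (intro Mdiff) auto
  also have "\<dots> = (\<Sum>j=1..n. ?m j * w j)" using eq by (rule sum.cong[OF refl])
  finally show ?thesis using val mcl wcl mG by (intro exI[of _ "hyb \<xi> \<xi>'"] exI[of _ w]) auto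
qed

lemma tm_mem:
  assumes "y1 \<in> G (p + k1 - 1)" "d y1 = a * x1" "y3 \<in> G (p + k3 - 1)" "d y3 = a * x3" "x1 \<in> G k1"
  shows "cls d (x1 * y3 + psign (p + k1 - 1) y1 * x3) \<in> tmassey G d k1 p k3 x1 a x3"
proof -
  have "x1 * y3 + psign (p + k1 - 1) y1 * x3 = x1 * y3 + psign (k1 + 1) (y1 * x3)"
    by (simp add: psign_mult_left psign_cong pev)
  moreover have "y1 \<in> G (k1 + p - 1)" using assms by (simp add: add.commute)
  moreover have "d y1 = x1 * a" using assms acomm by auto
  ultimately show ?thesis unfolding tmassey_def using assms(3,4)
    by (intro CollectI exI[of _ y1] exI[of _ y3]) auto
qed

lemma swap:
  assumes "x1 \<in> G k1" "x3 \<in> G k3" "y1 \<in> G (p + k1 - 1)" "y3 \<in> G (p + k3 - 1)"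
  shows "x1 * y3 + psign (p + k1 - 1) y1 * x3
       = psign ((p + k1 - 1) * (1 + k3)) (x3 * y1 + psign (p + k3 - 1) y3 * x1)"
proof -
  have c1: "x3 * y1 = psign (k3 * (p + k1 - 1)) (y1 * x3)" using comm[OF assms(2,3)] .
  have c2: "y3 * x1 = psign ((p + k3 - 1) * k1) (x1 * y3)" using comm[OF assms(4,1)] .
  have s1: "psign ((p + k1 - 1) * (1 + k3)) (psign (k3 * (p + k1 - 1)) z) = psign (p + k1 - 1) z" for z :: 'a
    unfolding psign_add[symmetric] by (rule psign_cong) (auto simp: pev)
  have s2: "psign ((p + k1 - 1) * (1 + k3)) (psign (p + k3 - 1) (psign ((p + k3 - 1) * k1) z)) = z" for z :: 'a
  proof -
    have "psign ((p + k1 - 1) * (1 + k3)) (psign (p + k3 - 1) (psign ((p + k3 - 1) * k1) z))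
        = psign ((p + k1 - 1) * (1 + k3) + ((p + k3 - 1) + (p + k3 - 1) * k1)) z"
      by (simp add: psign_add)
    also have "\<dots> = z" using pev by (intro psign_even) auto
    finally show ?thesis .
  qed
  show ?thesis
    unfolding c1 c2 psign_mult_left psign_plus s1 s2 by (rule add.commute)
qed

end



lemma psign_invol: "psign k (psign k x) = x" by (simp add: psign_def)

lemma sum3: "(\<Sum>j=1..3. f j) = f 1 + f 2 + f 3" for f :: "nat \<Rightarrow> 'a::comm_monoid_add"
proof -
  have "{1..3::nat} = {1,2,3}" by auto
  then show ?thesis by (simp add: add.assoc)
qed

theorem proposition2p7:
  fixes G :: "int \<Rightarrow> 'a::real_algebra_1 set" and d :: "'a \<Rightarrow> 'a"
    and a :: 'a and b :: "nat \<Rightarrow> 'a" and p :: int and q :: "nat \<Rightarrow> int" and n :: nat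
  assumes "is_DGA G d"
    and "a \<in> G p" and "even p" and "d a = 0"
    and "\<forall>i\<in>{1..n}. b i \<in> G (q i) \<and> d (b i) = 0 \<and> a * b i \<in> range d"
  shows "indet (amassey G d p q a b n)
           \<subseteq> ssum d (\<lambda>j. smul d (amassey G d p (omit j q) a (omit j b) (n - 1)) (Hset d)) n
       \<and> (n = 3 \<longrightarrow>
           indet (amassey G d p q a b 3)
           \<subseteq> sadd (sadd (smul d (tmassey G d (q 1) p (q 2) (b 1) a (b 2)) (Hset d))
                        (smul d (tmassey G d (q 2) p (q 3) (b 2) a (b 3)) (Hset d)))
                  (smul d (tmassey G d (q 3) p (q 1) (b 3) a (b 1)) (Hset d)))"
proof -
  interpret dga G d p a using assms by unfold_locales auto
  have bt: "\<forall>i\<in>{1..n}. b i \<in> G (q i) \<and> d (b i) = 0" using assms(5) by auto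
  have part1: "indet (amassey G d p q a b n)
           \<subseteq> ssum d (\<lambda>j. smul d (amassey G d p (omit j q) a (omit j b) (n - 1)) (Hset d)) n"
  proof
    fix X assume "X \<in> indet (amassey G d p q a b n)"
    then obtain \<xi>' \<xi> where X: "X = hdiff (cls d (Mm p q b n \<xi>')) (cls d (Mm p q b n \<xi>))"
      and v2: "\<forall>i\<in>{1..n}. \<xi>' i \<in> G (p + q i - 1) \<and> d (\<xi>' i) = a * b i"
      and v1: "\<forall>i\<in>{1..n}. \<xi> i \<in> G (p + q i - 1) \<and> d (\<xi> i) = a * b i"
      unfolding indet_def amassey_eq by blast
    obtain \<zeta> w where
      H: "\<forall>j\<in>{1..n}. (\<forall>i\<in>{1..n - 1}. \<zeta> j i \<in> G (p + omit j q i - 1) \<and> d (\<zeta> j i) = a * omit j b i)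
              \<and> d (w j) = 0 \<and> d (Mm p (omit j q) (omit j b) (n - 1) (\<zeta> j)) = 0
              \<and> Mm p (omit j q) (omit j b) (n - 1) (\<zeta> j) \<in> G (Ecum p (omit j q) (n - 1) - p + 1)"
      and E: "Mm p q b n \<xi>' - Mm p q b n \<xi> = (\<Sum>j=1..n. Mm p (omit j q) (omit j b) (n - 1) (\<zeta> j) * w j)"
      using core[OF v1 v2 bt] by blast
    have "X = cls d (\<Sum>j=1..n. Mm p (omit j q) (omit j b) (n - 1) (\<zeta> j) * w j)"
      unfolding X hdiff_cls E ..
    also have "\<dots> \<in> ssum d (\<lambda>j. smul d (amassey G d p (omit j q) a (omit j b) (n - 1)) (Hset d)) n"
    proof (rule ssum_mem, rule ballI)
      fix j assume jn: "j \<in> {1..n}"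
      let ?m = "Mm p (omit j q) (omit j b) (n - 1) (\<zeta> j)"
      have "cls d (?m * w j) = hmul d (cls d ?m) (cls d (w j))"
        using H jn by (intro hmul_cls[symmetric]) auto
      moreover have "cls d ?m \<in> amassey G d p (omit j q) a (omit j b) (n - 1)"
        unfolding amassey_eq using H jn by blast
      moreover have "cls d (w j) \<in> Hset d" unfolding Hset_def using H jn by blast
      ultimately show "cls d (?m * w j) \<in> smul d (amassey G d p (omit j q) a (omit j b) (n - 1)) (Hset d)"
        unfolding smul_def by blast
    qed
    finally show "X \<in> ssum d (\<lambda>j. smul d (amassey G d p (omit j q) a (omit j b) (n - 1)) (Hset d)) n" .
  qed
  have part2: "indet (amassey G d p q a b 3)
           \<subseteq> sadd (sadd (smul d (tmassey G d (q 1) p (q 2) (b 1) a (b 2)) (Hset d))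
                        (smul d (tmassey G d (q 2) p (q 3) (b 2) a (b 3)) (Hset d)))
                  (smul d (tmassey G d (q 3) p (q 1) (b 3) a (b 1)) (Hset d))" if n3: "n = 3"
  proof
    have bt3: "\<forall>i\<in>{1..3}. b i \<in> G (q i) \<and> d (b i) = 0" using bt n3 by simp
    have b1: "b 1 \<in> G (q 1)" "d (b 1) = 0" and b2: "b 2 \<in> G (q 2)" "d (b 2) = 0"
      and b3: "b 3 \<in> G (q 3)" "d (b 3) = 0" using bt3 by auto
    fix X assume "X \<in> indet (amassey G d p q a b 3)"
    then obtain \<xi>' \<xi> where X: "X = hdiff (cls d (Mm p q b 3 \<xi>')) (cls d (Mm p q b 3 \<xi>))"
      and v2: "\<forall>i\<in>{1..3}. \<xi>' i \<in> G (p + q i - 1) \<and> d (\<xi>' i) = a * b i"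
      and v1: "\<forall>i\<in>{1..3}. \<xi> i \<in> G (p + q i - 1) \<and> d (\<xi> i) = a * b i"
      unfolding indet_def amassey_eq by blast
    obtain \<zeta> w where
      H: "\<forall>j\<in>{1..3}. (\<forall>i\<in>{1..3 - 1}. \<zeta> j i \<in> G (p + omit j q i - 1) \<and> d (\<zeta> j i) = a * omit j b i)
              \<and> d (w j) = 0 \<and> d (Mm p (omit j q) (omit j b) (3 - 1) (\<zeta> j)) = 0
              \<and> Mm p (omit j q) (omit j b) (3 - 1) (\<zeta> j) \<in> G (Ecum p (omit j q) (3 - 1) - p + 1)"
      and E: "Mm p q b 3 \<xi>' - Mm p q b 3 \<xi> = (\<Sum>j=1..3. Mm p (omit j q) (omit j b) (3 - 1) (\<zeta> j) * w j)"
      using core[OF v1 v2 bt3] by blast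
    define m where "m j = Mm p (omit j q) (omit j b) 2 (\<zeta> j)" for j
    have Hj: "\<forall>i\<in>{1..2}. \<zeta> j i \<in> G (p + omit j q i - 1) \<and> d (\<zeta> j i) = a * omit j b i"
      "d (w j) = 0" "d (m j) = 0" "m j \<in> G (Ecum p (omit j q) 2 - p + 1)" if "j \<in> {1..3}" for j
      using H that by (auto simp: m_def)
    have Hji: "\<zeta> j i \<in> G (p + omit j q i - 1) \<and> d (\<zeta> j i) = a * omit j b i" if "j \<in> {1..3}" "i \<in> {1..2}" for j i
      using Hj(1)[OF that(1)] that(2) by blast
    have H1: "\<zeta> 1 1 \<in> G (p + q 2 - 1)" "d (\<zeta> 1 1) = a * b 2" "\<zeta> 1 2 \<in> G (p + q 3 - 1)" "d (\<zeta> 1 2) = a * b 3"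
      using Hji[of 1 1] Hji[of 1 2] by (simp_all add: omit_def numeral_2_eq_2 numeral_3_eq_3)
    have H2: "\<zeta> 2 1 \<in> G (p + q 1 - 1)" "d (\<zeta> 2 1) = a * b 1" "\<zeta> 2 2 \<in> G (p + q 3 - 1)" "d (\<zeta> 2 2) = a * b 3"
      using Hji[of 2 1] Hji[of 2 2] by (simp_all add: omit_def numeral_2_eq_2 numeral_3_eq_3)
    have H3: "\<zeta> 3 1 \<in> G (p + q 1 - 1)" "d (\<zeta> 3 1) = a * b 1" "\<zeta> 3 2 \<in> G (p + q 2 - 1)" "d (\<zeta> 3 2) = a * b 2"
      using Hji[of 3 1] Hji[of 3 2] by (simp_all add: omit_def numeral_2_eq_2 numeral_3_eq_3)
    have m1: "m 1 = b 2 * \<zeta> 1 2 + psign (p + q 2 - 1) (\<zeta> 1 1) * b 3"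
      by (simp add: m_def Mm_two omit_def) (simp add: numeral_2_eq_2)
    have m2: "m 2 = b 1 * \<zeta> 2 2 + psign (p + q 1 - 1) (\<zeta> 2 1) * b 3"
      by (simp add: m_def Mm_two omit_def)
    have m3: "m 3 = b 1 * \<zeta> 3 2 + psign (p + q 1 - 1) (\<zeta> 3 1) * b 2"
      by (simp add: m_def Mm_two omit_def)
    define \<epsilon> where "\<epsilon> = (p + q 1 - 1) * (1 + q 3)"
    define t2 where "t2 = b 3 * \<zeta> 2 1 + psign (p + q 3 - 1) (\<zeta> 2 2) * b 1"
    have m2t: "m 2 = psign \<epsilon> t2" unfolding m2 t2_def \<epsilon>_def
      by (rule swap) (use b1 b3 H2 in auto)
    have t2m: "t2 = psign \<epsilon> (m 2)" using m2t psign_invol by metis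
    have T1: "cls d (m 3) \<in> tmassey G d (q 1) p (q 2) (b 1) a (b 2)"
      unfolding m3 by (rule tm_mem) (use b1 b2 H3 in auto)
    have T2: "cls d (m 1) \<in> tmassey G d (q 2) p (q 3) (b 2) a (b 3)"
      unfolding m1 by (rule tm_mem) (use b2 b3 H1 in auto)
    have T3: "cls d t2 \<in> tmassey G d (q 3) p (q 1) (b 3) a (b 1)"
      unfolding t2_def by (rule tm_mem) (use b1 b3 H2 in auto)
    have W: "cls d (w j) \<in> Hset d" if "j \<in> {1..3}" for j
      unfolding Hset_def using Hj(2)[OF that] by blast
    have W2: "cls d (psign \<epsilon> (w 2)) \<in> Hset d"
      unfolding Hset_def using Hj(2)[of 2] by (auto simp: d_psign)
    have A1: "hmul d (cls d (m 3)) (cls d (w 3)) = cls d (m 3 * w 3)"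
      using Hj[of 3] by (intro hmul_cls) auto
    have A2: "hmul d (cls d (m 1)) (cls d (w 1)) = cls d (m 1 * w 1)"
      using Hj[of 1] by (intro hmul_cls) auto
    have A3: "hmul d (cls d t2) (cls d (psign \<epsilon> (w 2))) = cls d (m 2 * w 2)"
    proof -
      have "hmul d (cls d t2) (cls d (psign \<epsilon> (w 2))) = cls d (t2 * psign \<epsilon> (w 2))"
        using Hj[of 2] unfolding t2m by (intro hmul_cls) (auto simp: d_psign intro: Gpsign)
      also have "t2 * psign \<epsilon> (w 2) = m 2 * w 2"
        unfolding m2t by (simp add: psign_mult_left psign_mult_right psign_invol)
      finally show ?thesis .
    qed
    have "X = cls d (m 1 * w 1 + m 2 * w 2 + m 3 * w 3)"
      unfolding X hdiff_cls E sum3 by (simp add: m_def)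
    also have "\<dots> = hadd (hadd (hmul d (cls d (m 3)) (cls d (w 3))) (hmul d (cls d (m 1)) (cls d (w 1))))
                        (hmul d (cls d t2) (cls d (psign \<epsilon> (w 2))))"
      unfolding A1 A2 A3 hadd_cls by (simp add: ac_simps)
    also have "\<dots> \<in> sadd (sadd (smul d (tmassey G d (q 1) p (q 2) (b 1) a (b 2)) (Hset d))
                        (smul d (tmassey G d (q 2) p (q 3) (b 2) a (b 3)) (Hset d)))
                  (smul d (tmassey G d (q 3) p (q 1) (b 3) a (b 1)) (Hset d))"
    proof -
      have w3: "cls d (w 3) \<in> Hset d" and w1: "cls d (w 1) \<in> Hset d" using W by auto
      show ?thesis unfolding sadd_def smul_def
        using T1 T2 T3 w3 w1 W2 by blast
    qed
    finally show "X \<in> sadd (sadd (smul d (tmassey G d (q 1) p (q 2) (b 1) a (b 2)) (Hset d))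
                        (smul d (tmassey G d (q 2) p (q 3) (b 2) a (b 3)) (Hset d)))
                  (smul d (tmassey G d (q 3) p (q 1) (b 3) a (b 1)) (Hset d))" .
  qed
  show ?thesis using part1 part2 by blast
qed



end
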